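(* In the construction described in the context, for every $n \geq 0$ one has $\alpha_{n+1} \circ \Gamma_{n+1,n} = \Gamma_{n+1,n} \circ \alpha_n$ as maps $C_n \to C_{n+1}$. Consequently the $\alpha_n$ induce an automorphism $\alpha$ of $C = \varinjlim C_n$ with $\alpha \circ \Gamma_{\infty,n} = \Gamma_{\infty,n}\circ \alpha_n$ for all $n$.
   Context: Construction. Let $(d(n))_{n\ge 0}$ be natural numbers with $d(0)=1$ and $d(n) > 2^{n-1}$ for $n \ge 1$. Put $l(0)=1$, $l(n) = d(n) + 2^{n-1}$ for $n\ge1$, $r(n) = \prod_{j=0}^n l(j)$, $s(n) = \prod_{j=0}^n d(j)$, and $\kappa = \inf_{n\in\mathbb{N}} s(n)/r(n)$; assume $\kappa > 1/2$ (e.g. $d(n)=10^n$). Let $X_n = (S^2)^{s(n)}$, identified with $X_{n+1} = X_n^{d(n+1)}$, and let $P^{(n)}_j\colon X_{n+1}\to X_n$ ($1\le j\le d(n+1)$) be the $j$-th coordinate projection. Choose points $x_m \in X_m$ ($m\ge 0$) such that for every $n\ge 0$ the set of points $(P^{(n)}_{\nu_1}\circ P^{(n+1)}_{\nu_2}\circ\cdots\circ P^{(m-1)}_{\nu_{m-n}})(x_m)$, over all $m>n$ and all $\nu_j \in \{1,\dots,d(n+j)\}$, is dense in $X_n$. Let $\mathbb{Z}_{2^n} = \mathbb{Z}/2^n\mathbb{Z}$, $\pi_{n,n+1}\colon \mathbb{Z}_{2^{n+1}}\to\mathbb{Z}_{2^n}$ the reduction mod $2^n$. Set $C_n = M_{r(n)}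 \otimes C(X_n \times \mathbb{Z}_{2^n}) \cong C(X_n\times\mathbb{Z}_{2^n}, M_{r(n)})$, identifying $M_{r(n)} = M_{l(1)}\otimes\cdots\otimes M_{l(n)}$. Define $S_{n,1},\dots,S_{n,l(n+1)}\colon X_{n+1}\times\mathbb{Z}_{2^{n+1}} \to X_n\times \mathbb{Z}_{2^n}$ by $S_{n,j}(x,k) = (P^{(n)}_j(x), \pi_{n,n+1}(k))$ for $1\le j\le d(n+1)$, and $S_{n,d(n+1)+1+j}(x,k) = (x_n, j)$ for $j = 0,1,\dots,2^n-1$. Let $\gamma_n\colon C(X_n\times\mathbb{Z}_{2^n}) \to M_{l(n+1)}(C(X_{n+1}\times\mathbb{Z}_{2^{n+1}}))$, $\gamma_n(f) = \operatorname{diag}(f\circ S_{n,1},\dots,f\circ S_{n,l(n+1)})$, and $\Gamma_{n+1,n} = \mathrm{id}_{M_{r(n)}}\otimes\gamma_n\colon C_n\to C_{n+1}$; $\Gamma_{n,m}$ denote the composites and $C = \varinjlim C_n$ with canonical maps $\Gamma_{\infty,m}\colon C_m\to C$. For $n\ge1$ let $v_n\in M_{l(n)}$ be the unitary $v_n = \sum_{j=1}^{d(n)} e_{j,j} + \sum_{j=1}^{2^{n-1}-1} e_{d(n)+j,\,d(n)+j+1} + e_{d(n)+2^{n-1},\,d(n)+1}$ (identity on the first $d(n)$ coordinates, cyclic permutation of the last $2^{n-1}$), let $u_n = v_1\otimes\cdots\otimes v_n \in M_{r(n)}$ ($u_0=1$), and define automorphisms $\alpha_n$ of $C_n$ by $\alpha_n(f)(x,k)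 = u_n f(x, k+1) u_n^*$. *)

theory Defs
  imports "HOL-Analysis.Analysis"
begin

text \<open>Points of X_n = (S^2)^{s(n)} are functions pt = nat => real^3 whose coordinates
  i < s(n) lie on the unit sphere and whose other coordinates are 0.
  Z_{2^n} is represented by {0..<2^n}, addition taken mod 2^n.
  M_{r(n)} = M_{l(1)} (x) ... (x) M_{l(n)} is represented with multi-indices:
  index lists a of length n with 1 <= a!j <= l(j+1); matrices are functions
  nat list => nat list => complex.  An element of C_n is a function
  pt => nat => matrix, considered only on X_n x Z_{2^n} and valid indices.\<close>

type_synonym pt = "nat \<Rightarrow> real^3"
type_synonym mat = "nat list \<Rightarrow> nat list \<Rightarrow> complex"
type_synonym elt = "pt \<Rightarrow> nat \<Rightarrow> mat"

definition lsz :: "(nat \<Rightarrow> nat) \<Rightarrow> nat \<Rightarrow> nat" where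
  "lsz d n = (if n = 0 then 1 else d n + 2 ^ (n - 1))"

definition rsz :: "(nat \<Rightarrow> nat) \<Rightarrow> nat \<Rightarrow> nat" where
  "rsz d n = (\<Prod>j\<le>n. lsz d j)"

definition ssz :: "(nat \<Rightarrow> nat) \<Rightarrow> nat \<Rightarrow> nat" where
  "ssz d n = (\<Prod>j\<le>n. d j)"

definition kappa :: "(nat \<Rightarrow> nat) \<Rightarrow> real" where
  "kappa d = (INF n. real (ssz d n) / real (rsz d n))"

definition Xsp :: "(nat \<Rightarrow> nat) \<Rightarrow> nat \<Rightarrow> pt set" where
  "Xsp d n = {x. (\<forall>i < ssz d n. x i \<in> sphere 0 1) \<and> (\<forall>i. ssz d n \<le> i \<longrightarrow> x i = 0)}"

text \<open>X_{n+1} = X_n^{d(n+1)}: the j-th block (1 <= j <= d(n+1)) consists of the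
  coordinates (j-1) s(n), ..., j s(n) - 1.  proj d n j is P^{(n)}_j.\<close>
definition proj :: "(nat \<Rightarrow> nat) \<Rightarrow> nat \<Rightarrow> nat \<Rightarrow> pt \<Rightarrow> pt" where
  "proj d n j x = (\<lambda>i. if i < ssz d n then x ((j - 1) * ssz d n + i) else 0)"

fun iproj :: "(nat \<Rightarrow> nat) \<Rightarrow> nat \<Rightarrow> (nat \<Rightarrow> nat) \<Rightarrow> nat \<Rightarrow> pt \<Rightarrow> pt" where
  "iproj d n \<nu> 0 x = x"
| "iproj d n \<nu> (Suc k) x = proj d n (\<nu> 1) (iproj d (Suc n) (\<lambda>j. \<nu> (Suc j)) k x)"

definition dense_pts :: "(nat \<Rightarrow> nat) \<Rightarrow> (nat \<Rightarrow> pt) \<Rightarrow> nat \<Rightarrow> pt set" where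
  "dense_pts d xs n = {iproj d n \<nu> (m - n) (xs m) | m \<nu>.
      n < m \<and> (\<forall>j\<in>{1..m - n}. 1 \<le> \<nu> j \<and> \<nu> j \<le> d (n + j))}"

definition idx :: "(nat \<Rightarrow> nat) \<Rightarrow> nat \<Rightarrow> nat list set" where
  "idx d n = {a. length a = n \<and> (\<forall>j<n. 1 \<le> a ! j \<and> a ! j \<le> lsz d (Suc j))}"

text \<open>v_n (entries indexed from 1).\<close>
definition vmat :: "(nat \<Rightarrow> nat) \<Rightarrow> nat \<Rightarrow> nat \<Rightarrow> nat \<Rightarrow> complex" where
  "vmat d n p q =
     (if (1 \<le> p \<and> p \<le> d n \<and> q = p)
       \<or> (d n < p \<and> p < d n + 2 ^ (n - 1) \<and> q = p + 1)
       \<or> (p = d n + 2 ^ (n - 1) \<and> q = d n + 1) then 1 else 0)"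

definition umat :: "(nat \<Rightarrow> nat) \<Rightarrow> nat \<Rightarrow> mat" where
  "umat d n a b = (\<Prod>j<n. vmat d (Suc j) (a ! j) (b ! j))"

definition mmul :: "(nat \<Rightarrow> nat) \<Rightarrow> nat \<Rightarrow> mat \<Rightarrow> mat \<Rightarrow> mat" where
  "mmul d n A B a b = (\<Sum>c\<in>idx d n. A a c * B c b)"

definition madj :: "mat \<Rightarrow> mat" where
  "madj A a b = cnj (A b a)"

definition Cset :: "(nat \<Rightarrow> nat) \<Rightarrow> nat \<Rightarrow> elt set" where
  "Cset d n = {f. \<forall>k < 2 ^ n. \<forall>a\<in>idx d n. \<forall>b\<in>idx d n.
                   continuous_on (Xsp d n) (\<lambda>x. f x k a b)}"

definition eqC :: "(nat \<Rightarrow> nat) \<Rightarrow> nat \<Rightarrow> elt \<Rightarrow> elt \<Rightarrow> bool" where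
  "eqC d n f g = (\<forall>y\<in>Xsp d n. \<forall>k < 2 ^ n. \<forall>a\<in>idx d n. \<forall>b\<in>idx d n. f y k a b = g y k a b)"

definition alph :: "(nat \<Rightarrow> nat) \<Rightarrow> nat \<Rightarrow> elt \<Rightarrow> elt" where
  "alph d n f = (\<lambda>y k. mmul d n (mmul d n (umat d n) (f y ((k + 1) mod 2 ^ n))) (madj (umat d n)))"

definition Smap :: "(nat \<Rightarrow> nat) \<Rightarrow> (nat \<Rightarrow> pt) \<Rightarrow> nat \<Rightarrow> nat \<Rightarrow> pt \<Rightarrow> nat \<Rightarrow> pt \<times> nat" where
  "Smap d xs n j y k =
     (if j \<le> d (Suc n) then (proj d n j y, k mod 2 ^ n) else (xs n, j - d (Suc n) - 1))"

text \<open>Gamma_{n+1,n} = id_{M_{r(n)}} (x) gamma_n, the last tensor factor being M_{l(n+1)}.\<close>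
definition Gam1 :: "(nat \<Rightarrow> nat) \<Rightarrow> (nat \<Rightarrow> pt) \<Rightarrow> nat \<Rightarrow> elt \<Rightarrow> elt" where
  "Gam1 d xs n f = (\<lambda>y k a b.
      if last a = last b
      then f (fst (Smap d xs n (last a) y k)) (snd (Smap d xs n (last a) y k)) (butlast a) (butlast b)
      else 0)"

text \<open>Gam d xs n p = Gamma_{n+p,n}.\<close>
fun Gam :: "(nat \<Rightarrow> nat) \<Rightarrow> (nat \<Rightarrow> pt) \<Rightarrow> nat \<Rightarrow> nat \<Rightarrow> elt \<Rightarrow> elt" where
  "Gam d xs n 0 f = f"
| "Gam d xs n (Suc p) f = Gam1 d xs (n + p) (Gam d xs n p f)"

text \<open>The (algebraic) inductive limit: classes of pairs (n, f), f in C_n.\<close>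
definition limrel :: "(nat \<Rightarrow> nat) \<Rightarrow> (nat \<Rightarrow> pt) \<Rightarrow> ((nat \<times> elt) \<times> (nat \<times> elt)) set" where
  "limrel d xs = {((n, f), (m, g)). f \<in> Cset d n \<and> g \<in> Cset d m \<and>
      (\<exists>p. n \<le> p \<and> m \<le> p \<and> eqC d p (Gam d xs n (p - n) f) (Gam d xs m (p - m) g))}"

definition Clim :: "(nat \<Rightarrow> nat) \<Rightarrow> (nat \<Rightarrow> pt) \<Rightarrow> (nat \<times> elt) set set" where
  "Clim d xs = (SIGMA n:UNIV. Cset d n) // limrel d xs"

definition Ginf :: "(nat \<Rightarrow> nat) \<Rightarrow> (nat \<Rightarrow> pt) \<Rightarrow> nat \<Rightarrow> elt \<Rightarrow> (nat \<times> elt) set" where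
  "Ginf d xs n f = limrel d xs `` {(n, f)}"

definition eadd :: "elt \<Rightarrow> elt \<Rightarrow> elt" where
  "eadd f g = (\<lambda>y k a b. f y k a b + g y k a b)"
definition emul :: "(nat \<Rightarrow> nat) \<Rightarrow> nat \<Rightarrow> elt \<Rightarrow> elt \<Rightarrow> elt" where
  "emul d p f g = (\<lambda>y k. mmul d p (f y k) (g y k))"
definition esmul :: "complex \<Rightarrow> elt \<Rightarrow> elt" where
  "esmul c f = (\<lambda>y k a b. c * f y k a b)"
definition estar :: "elt \<Rightarrow> elt" where
  "estar f = (\<lambda>y k. madj (f y k))"

definition cadd :: "(nat \<Rightarrow> nat) \<Rightarrow> (nat \<Rightarrow> pt) \<Rightarrow> (nat \<times> elt) set \<Rightarrow> (nat \<times> elt) set \<Rightarrow> (nat \<times> elt) set" where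
  "cadd d xs A B = (\<Union>(n, f)\<in>A. \<Union>(m, g)\<in>B.
      Ginf d xs (max n m) (eadd (Gam d xs n (max n m - n) f) (Gam d xs m (max n m - m) g)))"
definition cmul :: "(nat \<Rightarrow> nat) \<Rightarrow> (nat \<Rightarrow> pt) \<Rightarrow> (nat \<times> elt) set \<Rightarrow> (nat \<times> elt) set \<Rightarrow> (nat \<times> elt) set" where
  "cmul d xs A B = (\<Union>(n, f)\<in>A. \<Union>(m, g)\<in>B.
      Ginf d xs (max n m) (emul d (max n m) (Gam d xs n (max n m - n) f) (Gam d xs m (max n m - m) g)))"
definition csmul :: "(nat \<Rightarrow> nat) \<Rightarrow> (nat \<Rightarrow> pt) \<Rightarrow> complex \<Rightarrow> (nat \<times> elt) set \<Rightarrow> (nat \<times> elt) set" where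
  "csmul d xs c A = (\<Union>(n, f)\<in>A. Ginf d xs n (esmul c f))"
definition cstar :: "(nat \<Rightarrow> nat) \<Rightarrow> (nat \<Rightarrow> pt) \<Rightarrow> (nat \<times> elt) set \<Rightarrow> (nat \<times> elt) set" where
  "cstar d xs A = (\<Union>(n, f)\<in>A. Ginf d xs n (estar f))"

end

theory Submission
  imports Defs
begin


definition tau :: "(nat \<Rightarrow> nat) \<Rightarrow> nat \<Rightarrow> nat \<Rightarrow> nat" where
  "tau d m p = (if p \<le> d m then p else if p < d m + 2 ^ (m - 1) then p + 1 else d m + 1)"
definition rho :: "(nat \<Rightarrow> nat) \<Rightarrow> nat \<Rightarrow> nat \<Rightarrow> nat" where
  "rho d m p = (if p \<le> d m then p else if p = d m + 1 then d m + 2 ^ (m - 1) else p - 1)"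
definition sig :: "(nat \<Rightarrow> nat) \<Rightarrow> nat list \<Rightarrow> nat list" where
  "sig d a = map (\<lambda>j. tau d (Suc j) (a ! j)) [0..<length a]"
definition rhol :: "(nat \<Rightarrow> nat) \<Rightarrow> nat list \<Rightarrow> nat list" where
  "rhol d a = map (\<lambda>j. rho d (Suc j) (a ! j)) [0..<length a]"

lemma lsz_Suc: "lsz d (Suc j) = d (Suc j) + 2 ^ j"
  by (simp add: lsz_def)

lemma tau_props:
  assumes "1 \<le> p" "p \<le> d (Suc j) + 2 ^ j"
  shows "1 \<le> tau d (Suc j) p \<and> tau d (Suc j) p \<le> d (Suc j) + 2 ^ j
     \<and> 1 \<le> rho d (Suc j) p \<and> rho d (Suc j) p \<le> d (Suc j) + 2 ^ j
     \<and> rho d (Suc j) (tau d (Suc j) p) = p \<and> tau d (Suc j) (rho d (Suc j) p) = p"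
proof -
  have g: "\<And>e D::nat. 1 \<le> e \<Longrightarrow> p \<le> D + e \<Longrightarrow>
    1 \<le> (if p \<le> D then p else if p < D + e then p + 1 else D + 1) \<and> (if p \<le> D then p else if p < D + e then p + 1 else D + 1) \<le> D + e
    \<and> 1 \<le> (if p \<le> D then p else if p = D + 1 then D + e else p - 1) \<and> (if p \<le> D then p else if p = D + 1 then D + e else p - 1) \<le> D + e
    \<and> (let q = (if p \<le> D then p else if p < D + e then p + 1 else D + 1) in (if q \<le> D then q else if q = D + 1 then D + e else q - 1)) = p
    \<and> (let q = (if p \<le> D then p else if p = D + 1 then D + e else p - 1) in (if q \<le> D then q else if q < D + e then q + 1 else D + 1)) = p"
    using assms(1) by (auto simp: Let_def)
  have "(1::nat) \<le> 2 ^ j" by simp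
  from g[OF this assms(2)] show ?thesis by (simp only: tau_def rho_def diff_Suc_1 Let_def)
qed

lemma vmat_tau:
  assumes "1 \<le> p" "p \<le> d (Suc j) + 2 ^ j"
  shows "vmat d (Suc j) p q = (if q = tau d (Suc j) p then 1 else 0)"
proof -
  have "(1::nat) \<le> 2 ^ j" by simp
  then show ?thesis using assms unfolding tau_def vmat_def by auto
qed

lemma finite_idx: "finite (idx d n)"
proof -
  let ?M = "\<Sum>j<n. lsz d (Suc j)"
  have "idx d n \<subseteq> {a. set a \<subseteq> {0..?M} \<and> length a = n}"
  proof
    fix a assume a: "a \<in> idx d n"
    have "set a \<subseteq> {0..?M}"
    proof
      fix x assume "x \<in> set a"
      then obtain j where j: "j < length a" "a ! j = x" by (auto simp: in_set_conv_nth)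
      then have "j < n" using a by (simp add: idx_def)
      then have "x \<le> lsz d (Suc j)" using a j by (auto simp: idx_def)
      also have "\<dots> \<le> ?M" using \<open>j < n\<close> by (intro member_le_sum) auto
      finally show "x \<in> {0..?M}" by simp
    qed
    then show "a \<in> {a. set a \<subseteq> {0..?M} \<and> length a = n}" using a by (simp add: idx_def)
  qed
  moreover have "finite {a. set a \<subseteq> {0..?M} \<and> length a = n}"
    by (rule finite_lists_length_eq) simp
  ultimately show ?thesis by (rule finite_subset)
qed

lemma idx_Suc: "a \<in> idx d (Suc n) \<longleftrightarrow> length a = Suc n \<and> butlast a \<in> idx d n \<and> 1 \<le> last a \<and> last a \<le> lsz d (Suc n)"
proof
  assume a: "a \<in> idx d (Suc n)"
  then have l: "length a = Suc n" by (simp add: idx_def)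
  have "a \<noteq> []" using l by auto
  then have "last a = a ! n" using l by (simp add: last_conv_nth)
  moreover have "butlast a \<in> idx d n" using a l by (auto simp: idx_def nth_butlast)
  ultimately show "length a = Suc n \<and> butlast a \<in> idx d n \<and> 1 \<le> last a \<and> last a \<le> lsz d (Suc n)"
    using a l by (auto simp: idx_def)
next
  assume a: "length a = Suc n \<and> butlast a \<in> idx d n \<and> 1 \<le> last a \<and> last a \<le> lsz d (Suc n)"
  then have "a \<noteq> []" by auto
  with a have ln: "last a = a ! n" by (simp add: last_conv_nth)
  have "\<forall>j<Suc n. 1 \<le> a ! j \<and> a ! j \<le> lsz d (Suc j)"
  proof (intro allI impI)
    fix j assume "j < Suc n"
    then consider "j < n" | "j = n" by linarith
    then show "1 \<le> a ! j \<and> a ! j \<le> lsz d (Suc j)"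
    proof cases
      case 1 then show ?thesis using a by (auto simp: idx_def nth_butlast)
    next
      case 2 then show ?thesis using a ln by simp
    qed
  qed
  then show "a \<in> idx d (Suc n)" using a by (simp add: idx_def)
qed

lemma idx_snoc: "c \<in> idx d n \<Longrightarrow> 1 \<le> j \<Longrightarrow> j \<le> lsz d (Suc n) \<Longrightarrow> c @ [j] \<in> idx d (Suc n)"
  by (auto simp: idx_def nth_append less_Suc_eq)

lemma idx_len: "a \<in> idx d n \<Longrightarrow> length a = n" by (simp add: idx_def)

lemma sig_len [simp]: "length (sig d a) = length a" by (simp add: sig_def)
lemma rhol_len [simp]: "length (rhol d a) = length a" by (simp add: rhol_def)
lemma sig_nth [simp]: "j < length a \<Longrightarrow> sig d a ! j = tau d (Suc j) (a ! j)" by (simp add: sig_def)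
lemma rhol_nth [simp]: "j < length a \<Longrightarrow> rhol d a ! j = rho d (Suc j) (a ! j)" by (simp add: rhol_def)

lemma sig_idx: "a \<in> idx d n \<Longrightarrow> sig d a \<in> idx d n"
  using tau_props by (fastforce simp: idx_def lsz_Suc)
lemma rhol_idx: "a \<in> idx d n \<Longrightarrow> rhol d a \<in> idx d n"
  using tau_props by (fastforce simp: idx_def lsz_Suc)
lemma rhol_sig: "a \<in> idx d n \<Longrightarrow> rhol d (sig d a) = a"
  by (rule nth_equalityI) (use tau_props in \<open>auto simp: idx_def lsz_Suc\<close>)
lemma sig_rhol: "a \<in> idx d n \<Longrightarrow> sig d (rhol d a) = a"
  by (rule nth_equalityI) (use tau_props in \<open>auto simp: idx_def lsz_Suc\<close>)

lemma sig_bij: "bij_betw (sig d) (idx d n) (idx d n)"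
  by (rule bij_betw_byWitness[where f'="rhol d"]) (auto simp: rhol_sig sig_rhol sig_idx rhol_idx)

lemma butlast_sig: "butlast (sig d a) = sig d (butlast a)"
  by (rule nth_equalityI) (auto simp: nth_butlast)

lemma last_sig: "length a = Suc n \<Longrightarrow> last (sig d a) = tau d (Suc n) (last a)"
proof -
  assume "length a = Suc n"
  moreover then have "a \<noteq> []" "sig d a \<noteq> []" by (auto simp flip: length_0_conv)
  ultimately show ?thesis by (simp add: last_conv_nth)
qed

lemma prod_ind: "finite A \<Longrightarrow> (\<Prod>j\<in>A. (if P j then 1 else 0::complex)) = (if \<forall>j\<in>A. P j then 1 else 0)"
  by (auto intro: prod_zero)

lemma umat_sig:
  assumes "a \<in> idx d n" "b \<in> idx d n"
  shows "umat d n a b = (if b = sig d a then 1 else 0)"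
proof -
  have "umat d n a b = (\<Prod>j<n. (if b ! j = sig d a ! j then 1 else 0))"
    unfolding umat_def
    by (rule prod.cong) (use assms in \<open>auto simp: idx_def lsz_Suc vmat_tau\<close>)
  also have "\<dots> = (if \<forall>j\<in>{..<n}. b ! j = sig d a ! j then 1 else 0)" by (rule prod_ind) simp
  also have "(\<forall>j\<in>{..<n}. b ! j = sig d a ! j) = (b = sig d a)"
    using assms by (auto simp: idx_def list_eq_iff_nth_eq)
  finally show ?thesis .
qed

lemma mmul_umat_left: "a \<in> idx d n \<Longrightarrow> mmul d n (umat d n) X a c = X (sig d a) c"
proof -
  assume a: "a \<in> idx d n"
  have "mmul d n (umat d n) X a c = (\<Sum>c'\<in>idx d n. if c' = sig d a then X c' c else 0)"
    unfolding mmul_def by (rule sum.cong) (auto simp: umat_sig a)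
  also have "\<dots> = X (sig d a) c" using finite_idx sig_idx[OF a] by (simp add: sum.delta)
  finally show ?thesis .
qed

lemma mmul_uadj_right: "b \<in> idx d n \<Longrightarrow> mmul d n Y (madj (umat d n)) a b = Y a (sig d b)"
proof -
  assume b: "b \<in> idx d n"
  have "mmul d n Y (madj (umat d n)) a b = (\<Sum>c\<in>idx d n. if c = sig d b then Y a c else 0)"
    unfolding mmul_def madj_def by (rule sum.cong) (auto simp: umat_sig b)
  also have "\<dots> = Y a (sig d b)" using finite_idx sig_idx[OF b] by (simp add: sum.delta)
  finally show ?thesis .
qed

lemma alph_eq: "a \<in> idx d n \<Longrightarrow> b \<in> idx d n \<Longrightarrow>
   alph d n f y k a b = f y ((k + 1) mod 2 ^ n) (sig d a) (sig d b)"
  by (simp add: alph_def mmul_uadj_right mmul_umat_left)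



lemma ssz_Suc: "ssz d (Suc n) = ssz d n * d (Suc n)"
  by (simp add: ssz_def)

lemma proj_Xsp:
  assumes y: "y \<in> Xsp d (Suc n)" and j: "1 \<le> j" "j \<le> d (Suc n)"
  shows "proj d n j y \<in> Xsp d n"
proof -
  have "(j - 1) * ssz d n + i < ssz d (Suc n)" if "i < ssz d n" for i
  proof -
    have "(j - 1) * ssz d n + i < (j - 1) * ssz d n + ssz d n" using that by simp
    also have "\<dots> = j * ssz d n" using j by (cases j) auto
    also have "\<dots> \<le> d (Suc n) * ssz d n" using j by simp
    finally show ?thesis by (simp add: ssz_Suc mult.commute)
  qed
  then show ?thesis using y by (auto simp: Xsp_def proj_def)
qed

lemma proj_cont: "continuous_on S (proj d n j)"
  unfolding proj_def
proof (intro continuous_on_coordinatewise_then_product)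
  fix i show "continuous_on S (\<lambda>x. if i < ssz d n then x ((j - 1) * ssz d n + i) else 0)"
    by (cases "i < ssz d n") (auto intro: continuous_on_subset[OF continuous_on_product_coordinates subset_UNIV])
qed

lemma Smap_in:
  assumes xsX: "\<forall>m. xs m \<in> Xsp d m" and y: "y \<in> Xsp d (Suc n)"
    and j: "1 \<le> j" "j \<le> lsz d (Suc n)"
  shows "fst (Smap d xs n j y k) \<in> Xsp d n \<and> snd (Smap d xs n j y k) < 2 ^ n"
proof (cases "j \<le> d (Suc n)")
  case True then show ?thesis using proj_Xsp[OF y j(1) True] by (simp add: Smap_def)
next
  case False then show ?thesis using xsX j by (simp add: Smap_def lsz_Suc)
qed

lemma Gam1_eq: "Gam1 d xs n f y k a b =
   (if last a = last b then f (fst (Smap d xs n (last a) y k)) (snd (Smap d xs n (last a) y k)) (butlast a) (butlast b) else 0)"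
  by (simp add: Gam1_def)

lemma Gam1_Cset:
  assumes xsX: "\<forall>m. xs m \<in> Xsp d m" and f: "f \<in> Cset d n"
  shows "Gam1 d xs n f \<in> Cset d (Suc n)"
  unfolding Cset_def
proof (intro CollectI allI impI ballI)
  fix k :: nat and a b assume k: "k < 2 ^ Suc n" and a: "a \<in> idx d (Suc n)" and b: "b \<in> idx d (Suc n)"
  show "continuous_on (Xsp d (Suc n)) (\<lambda>x. Gam1 d xs n f x k a b)"
  proof (cases "last a = last b")
    case False then show ?thesis by (simp add: Gam1_eq)
  next
    case True
    have ba: "butlast a \<in> idx d n" and bb: "butlast b \<in> idx d n" and j: "1 \<le> last a" "last a \<le> lsz d (Suc n)"
      using a b by (auto simp: idx_Suc)
    show ?thesis
    proof (cases "last a \<le> d (Suc n)")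
      case False then show ?thesis using True by (simp add: Gam1_eq Smap_def)
    next
      case c: True
      have eq: "(\<lambda>x. Gam1 d xs n f x k a b) = (\<lambda>x. f (proj d n (last a) x) (k mod 2 ^ n) (butlast a) (butlast b))"
        using True c by (simp add: Gam1_eq Smap_def)
      have "continuous_on (Xsp d n) (\<lambda>x. f x (k mod 2 ^ n) (butlast a) (butlast b))"
        using f ba bb by (simp add: Cset_def)
      moreover have "proj d n (last a) ` Xsp d (Suc n) \<subseteq> Xsp d n" using proj_Xsp j c by auto
      ultimately show ?thesis unfolding eq by (rule continuous_on_compose2[OF _ proj_cont])
    qed
  qed
qed

lemma Gam_Cset: "\<forall>m. xs m \<in> Xsp d m \<Longrightarrow> f \<in> Cset d n \<Longrightarrow> Gam d xs n p f \<in> Cset d (n + p)"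
  by (induction p) (auto intro: Gam1_Cset)

lemma eqC_refl: "eqC d n f f" by (simp add: eqC_def)
lemma eqC_sym: "eqC d n f g \<Longrightarrow> eqC d n g f" by (simp add: eqC_def)
lemma eqC_trans: "eqC d n f g \<Longrightarrow> eqC d n g h \<Longrightarrow> eqC d n f h" by (simp add: eqC_def)

lemma Gam1_eqC:
  assumes xsX: "\<forall>m. xs m \<in> Xsp d m" and e: "eqC d n f g"
  shows "eqC d (Suc n) (Gam1 d xs n f) (Gam1 d xs n g)"
  unfolding eqC_def
proof (intro ballI allI impI)
  fix y and k :: nat and a b assume y: "y \<in> Xsp d (Suc n)" and k: "k < 2 ^ Suc n" and a: "a \<in> idx d (Suc n)" and b: "b \<in> idx d (Suc n)"
  have ba: "butlast a \<in> idx d n" and bb: "butlast b \<in> idx d n" and j: "1 \<le> last a" "last a \<le> lsz d (Suc n)"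
    using a b by (auto simp: idx_Suc)
  show "Gam1 d xs n f y k a b = Gam1 d xs n g y k a b"
  proof (cases "last a = last b")
    case True
    then have jb: "1 \<le> last b" "last b \<le> lsz d (Suc n)" using j by auto
    note S = Smap_in[OF xsX y jb, of k]
    show ?thesis using e S ba bb True by (simp add: Gam1_eq eqC_def)
  qed (simp add: Gam1_eq)
qed

lemma Gam_eqC: "\<forall>m. xs m \<in> Xsp d m \<Longrightarrow> eqC d n f g \<Longrightarrow> eqC d (n + p) (Gam d xs n p f) (Gam d xs n p g)"
  by (induction p) (auto intro: Gam1_eqC)

lemma Gam_add: "Gam d xs n (p + q) f = Gam d xs (n + p) q (Gam d xs n p f)"
  by (induction q) (simp_all add: add.assoc)

lemma Gam_le: "n \<le> p \<Longrightarrow> p \<le> P \<Longrightarrow> Gam d xs n (P - n) f = Gam d xs p (P - p) (Gam d xs n (p - n) f)"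
  using Gam_add[of d xs n "p - n" "P - p" f] by simp

lemma tau_Smap:
  assumes j: "1 \<le> j" "j \<le> lsz d (Suc n)"
  shows "Smap d xs n (tau d (Suc n) j) y ((k + 1) mod 2 ^ Suc n)
       = (fst (Smap d xs n j y k), (snd (Smap d xs n j y k) + 1) mod 2 ^ n)"
proof -
  have m: "((k + 1) mod 2 ^ Suc n) mod 2 ^ n = (k mod 2 ^ n + 1) mod 2 ^ n"
    by (simp add: mod_mod_cancel mod_Suc_eq)
  consider "j \<le> d (Suc n)" | "d (Suc n) < j" "j < d (Suc n) + 2 ^ n" | "j = d (Suc n) + 2 ^ n"
    using j by (force simp: lsz_Suc)
  then show ?thesis
  proof cases
    case 1 then show ?thesis using m by (simp add: tau_def Smap_def)
  next
    case 2
    then have "j - d (Suc n) < 2 ^ n" by simp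
    then show ?thesis using 2 by (simp add: tau_def Smap_def)
  next
    case 3
    have "(2::nat) ^ n - 1 + 1 = 2 ^ n" by simp
    then show ?thesis using 3 by (simp add: tau_def Smap_def)
  qed
qed

lemma tau_inj:
  assumes "1 \<le> p" "p \<le> lsz d (Suc j)" "1 \<le> q" "q \<le> lsz d (Suc j)"
  shows "(tau d (Suc j) p = tau d (Suc j) q) = (p = q)"
proof -
  have "rho d (Suc j) (tau d (Suc j) p) = p" "rho d (Suc j) (tau d (Suc j) q) = q"
    using tau_props[of p d j] tau_props[of q d j] assms by (auto simp: lsz_Suc)
  then show ?thesis by metis
qed

lemma part1:
  assumes xsX: "\<forall>m. xs m \<in> Xsp d m"
  shows "eqC d (Suc n) (alph d (Suc n) (Gam1 d xs n f)) (Gam1 d xs n (alph d n f))"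
  unfolding eqC_def
proof (intro ballI allI impI)
  fix y and k :: nat and a b assume y: "y \<in> Xsp d (Suc n)" and k: "k < 2 ^ Suc n" and a: "a \<in> idx d (Suc n)" and b: "b \<in> idx d (Suc n)"
  have ba: "butlast a \<in> idx d n" and bb: "butlast b \<in> idx d n" and ja: "1 \<le> last a" "last a \<le> lsz d (Suc n)"
    and jb: "1 \<le> last b" "last b \<le> lsz d (Suc n)" and la: "length a = Suc n" and lb: "length b = Suc n"
    using a b by (auto simp: idx_Suc)
  have L: "alph d (Suc n) (Gam1 d xs n f) y k a b = Gam1 d xs n f y ((k + 1) mod 2 ^ Suc n) (sig d a) (sig d b)"
    using a b by (rule alph_eq)
  show "alph d (Suc n) (Gam1 d xs n f) y k a b = Gam1 d xs n (alph d n f) y k a b"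
  proof (cases "last a = last b")
    case True
    show ?thesis unfolding L Gam1_eq last_sig[OF la] last_sig[OF lb] butlast_sig tau_inj[OF ja jb]
      using alph_eq[OF ba bb] tau_Smap[OF jb] True by simp
  next
    case False
    show ?thesis unfolding L Gam1_eq last_sig[OF la] last_sig[OF lb] butlast_sig tau_inj[OF ja jb]
      using False by simp
  qed
qed

lemma partGam:
  assumes xsX: "\<forall>m. xs m \<in> Xsp d m"
  shows "eqC d (n + p) (alph d (n + p) (Gam d xs n p f)) (Gam d xs n p (alph d n f))"
proof (induction p)
  case 0 then show ?case by (simp add: eqC_refl)
next
  case (Suc p)
  have "eqC d (Suc (n + p)) (alph d (Suc (n + p)) (Gam1 d xs (n + p) (Gam d xs n p f)))
          (Gam1 d xs (n + p) (alph d (n + p) (Gam d xs n p f)))" by (rule part1[OF xsX])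
  moreover have "eqC d (Suc (n + p)) (Gam1 d xs (n + p) (alph d (n + p) (Gam d xs n p f)))
          (Gam1 d xs (n + p) (Gam d xs n p (alph d n f)))" by (rule Gam1_eqC[OF xsX Suc.IH])
  ultimately show ?case by (auto intro: eqC_trans)
qed



lemma alph_Cset: assumes f: "f \<in> Cset d n" shows "alph d n f \<in> Cset d n"
  unfolding Cset_def
proof (intro CollectI allI impI ballI)
  fix k :: nat and a b assume k: "k < 2 ^ n" and a: "a \<in> idx d n" and b: "b \<in> idx d n"
  have "continuous_on (Xsp d n) (\<lambda>x. f x ((k + 1) mod 2 ^ n) (sig d a) (sig d b))"
    using f sig_idx[OF a] sig_idx[OF b] by (simp add: Cset_def)
  then show "continuous_on (Xsp d n) (\<lambda>x. alph d n f x k a b)"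
    using alph_eq[OF a b] by simp
qed

lemma alph_inv_pt:
  assumes a: "a \<in> idx d n" and b: "b \<in> idx d n" and k: "k < 2 ^ n"
  shows "alph d n f y ((k + 2 ^ n - 1) mod 2 ^ n) (rhol d a) (rhol d b) = f y k a b"
proof -
  have "((k + 2 ^ n - 1) mod 2 ^ n + 1) mod 2 ^ n = (k + 2 ^ n - 1 + 1) mod 2 ^ n"
    by (simp only: mod_add_left_eq)
  also have "k + 2 ^ n - 1 + 1 = k + 2 ^ n" by (simp add: Suc_leI)
  also have "(k + 2 ^ n) mod 2 ^ n = k" using k by simp
  finally show ?thesis using rhol_idx[OF a] rhol_idx[OF b] sig_rhol[OF a] sig_rhol[OF b]
    by (simp add: alph_eq)
qed

lemma alph_Cset_rev: assumes f: "alph d n f \<in> Cset d n" shows "f \<in> Cset d n"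
  unfolding Cset_def
proof (intro CollectI allI impI ballI)
  fix k :: nat and a b assume k: "k < 2 ^ n" and a: "a \<in> idx d n" and b: "b \<in> idx d n"
  have "(k + 2 ^ n - 1) mod 2 ^ n < 2 ^ n" by simp
  then have "continuous_on (Xsp d n) (\<lambda>x. alph d n f x ((k + 2 ^ n - 1) mod 2 ^ n) (rhol d a) (rhol d b))"
    using f rhol_idx[OF a] rhol_idx[OF b] by (simp add: Cset_def)
  then show "continuous_on (Xsp d n) (\<lambda>x. f x k a b)"
    using alph_inv_pt[OF a b k] by simp
qed

definition bet :: "(nat \<Rightarrow> nat) \<Rightarrow> nat \<Rightarrow> elt \<Rightarrow> elt" where
  "bet d n g = (\<lambda>y k a b. g y ((k + 2 ^ n - 1) mod 2 ^ n) (rhol d a) (rhol d b))"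

lemma bet_Cset: assumes f: "g \<in> Cset d n" shows "bet d n g \<in> Cset d n"
  unfolding Cset_def bet_def
proof (intro CollectI allI impI ballI)
  fix k :: nat and a b assume k: "k < 2 ^ n" and a: "a \<in> idx d n" and b: "b \<in> idx d n"
  have "(k + 2 ^ n - 1) mod 2 ^ n < 2 ^ n" by simp
  then show "continuous_on (Xsp d n) (\<lambda>x. g x ((k + 2 ^ n - 1) mod 2 ^ n) (rhol d a) (rhol d b))"
    using f rhol_idx[OF a] rhol_idx[OF b] by (simp add: Cset_def)
qed

lemma alph_bet: "eqC d n (alph d n (bet d n g)) g"
  unfolding eqC_def
proof (intro ballI allI impI)
  fix y and k :: nat and a b assume k: "k < 2 ^ n" and a: "a \<in> idx d n" and b: "b \<in> idx d n"
  have "((k + 1) mod 2 ^ n + 2 ^ n - 1) mod 2 ^ n = k"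
  proof (cases "k + 1 = 2 ^ n")
    case True then show ?thesis by simp
  next
    case False then have "k + 1 < 2 ^ n" using k by simp
    then show ?thesis by simp
  qed
  then show "alph d n (bet d n g) y k a b = g y k a b"
    using a b by (simp add: alph_eq bet_def rhol_sig)
qed

lemma alph_eqC: "eqC d n f g \<Longrightarrow> eqC d n (alph d n f) (alph d n g)"
  unfolding eqC_def by (simp add: alph_eq sig_idx)

lemma alph_eqC_rev: "eqC d n (alph d n f) (alph d n g) \<Longrightarrow> eqC d n f g"
  unfolding eqC_def
proof (intro ballI allI impI)
  fix y and k :: nat and a b assume e: "\<forall>y\<in>Xsp d n. \<forall>k<2 ^ n. \<forall>a\<in>idx d n. \<forall>b\<in>idx d n. alph d n f y k a b = alph d n g y k a b"
    and y: "y \<in> Xsp d n" and k: "k < 2 ^ n" and a: "a \<in> idx d n" and b: "b \<in> idx d n"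
  have "(k + 2 ^ n - 1) mod 2 ^ n < 2 ^ n" by simp
  then have "alph d n f y ((k + 2 ^ n - 1) mod 2 ^ n) (rhol d a) (rhol d b) = alph d n g y ((k + 2 ^ n - 1) mod 2 ^ n) (rhol d a) (rhol d b)"
    using e y rhol_idx[OF a] rhol_idx[OF b] by blast
  then show "f y k a b = g y k a b" using alph_inv_pt[OF a b k] by simp
qed



lemma R_iff: "((n, f), (m, g)) \<in> limrel d xs \<longleftrightarrow> f \<in> Cset d n \<and> g \<in> Cset d m \<and>
   (\<exists>p. n \<le> p \<and> m \<le> p \<and> eqC d p (Gam d xs n (p - n) f) (Gam d xs m (p - m) g))"
  by (simp add: limrel_def)

lemma Gam_Cset': "\<forall>m. xs m \<in> Xsp d m \<Longrightarrow> f \<in> Cset d n \<Longrightarrow> n \<le> P \<Longrightarrow> Gam d xs n (P - n) f \<in> Cset d P"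
  using Gam_Cset[of xs d f n "P - n"] by simp

lemma Gam_eqC': "\<forall>m. xs m \<in> Xsp d m \<Longrightarrow> eqC d p f g \<Longrightarrow> p \<le> P \<Longrightarrow> eqC d P (Gam d xs p (P - p) f) (Gam d xs p (P - p) g)"
  using Gam_eqC[of xs d p f g "P - p"] by simp

lemma R_lift:
  assumes xsX: "\<forall>m. xs m \<in> Xsp d m" and r: "((n, f), (m, g)) \<in> limrel d xs"
  obtains p0 where "n \<le> p0" "m \<le> p0" "\<And>P. p0 \<le> P \<Longrightarrow> eqC d P (Gam d xs n (P - n) f) (Gam d xs m (P - m) g)"
proof -
  from r obtain p where p: "n \<le> p" "m \<le> p" "eqC d p (Gam d xs n (p - n) f) (Gam d xs m (p - m) g)"
    by (auto simp: R_iff)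
  have "eqC d P (Gam d xs n (P - n) f) (Gam d xs m (P - m) g)" if "p \<le> P" for P
    using Gam_eqC'[OF xsX p(3) that] Gam_le[OF p(1) that, of d xs f] Gam_le[OF p(2) that, of d xs g] by simp
  with p show ?thesis using that by blast
qed

lemma R_intro: "f \<in> Cset d n \<Longrightarrow> g \<in> Cset d m \<Longrightarrow> n \<le> P \<Longrightarrow> m \<le> P \<Longrightarrow>
  eqC d P (Gam d xs n (P - n) f) (Gam d xs m (P - m) g) \<Longrightarrow> ((n, f), (m, g)) \<in> limrel d xs"
  by (auto simp: R_iff)

lemma R_equiv:
  assumes xsX: "\<forall>m. xs m \<in> Xsp d m"
  shows "equiv (SIGMA n:UNIV. Cset d n) (limrel d xs)"
proof (rule equivI)
  show "limrel d xs \<subseteq> (SIGMA n:UNIV. Cset d n) \<times> (SIGMA n:UNIV. Cset d n)"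
    by (auto simp: limrel_def)
  show "refl_on (SIGMA n:UNIV. Cset d n) (limrel d xs)"
    unfolding refl_on_def by (auto simp: R_iff eqC_refl)
  show "sym (limrel d xs)"
    unfolding sym_def by (auto simp: R_iff eqC_sym)
  show "trans (limrel d xs)"
    unfolding trans_def
  proof (intro allI impI)
    fix x y z assume xy: "(x, y) \<in> limrel d xs" and yz: "(y, z) \<in> limrel d xs"
    obtain n f m g q h where e: "x = (n, f)" "y = (m, g)" "z = (q, h)" by (cases x, cases y, cases z) auto
    obtain p1 where p1: "n \<le> p1" "m \<le> p1" "\<And>P. p1 \<le> P \<Longrightarrow> eqC d P (Gam d xs n (P - n) f) (Gam d xs m (P - m) g)"
      using R_lift[OF xsX xy[unfolded e]] by blast
    obtain p2 where p2: "m \<le> p2" "q \<le> p2" "\<And>P. p2 \<le> P \<Longrightarrow> eqC d P (Gam d xs m (P - m) g) (Gam d xs q (P - q) h)"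
      using R_lift[OF xsX yz[unfolded e]] by blast
    let ?P = "max p1 p2"
    have "eqC d ?P (Gam d xs n (?P - n) f) (Gam d xs q (?P - q) h)"
      using p1(3)[of ?P] p2(3)[of ?P] by (auto intro: eqC_trans)
    moreover have "f \<in> Cset d n" "h \<in> Cset d q" using xy yz e by (auto simp: R_iff)
    ultimately show "(x, z) \<in> limrel d xs" unfolding e
      using p1 p2 by (intro R_intro) auto
  qed
qed

lemma Ginf_mem: "x \<in> Ginf d xs n f \<longleftrightarrow> ((n, f), x) \<in> limrel d xs"
  by (simp add: Ginf_def)

lemma Ginf_empty: "f \<notin> Cset d n \<Longrightarrow> Ginf d xs n f = {}"
  by (auto simp: Ginf_def limrel_def)

lemma Ginf_self: "f \<in> Cset d n \<Longrightarrow> (n, f) \<in> Ginf d xs n f"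
  by (auto simp: Ginf_mem R_iff eqC_refl)

lemma Ginf_eq_iff: "\<forall>m. xs m \<in> Xsp d m \<Longrightarrow> f \<in> Cset d n \<Longrightarrow> g \<in> Cset d m \<Longrightarrow>
   (Ginf d xs n f = Ginf d xs m g) = (((n, f), (m, g)) \<in> limrel d xs)"
  unfolding Ginf_def by (rule eq_equiv_class_iff[OF R_equiv]) auto

lemma Ginf_Clim: "f \<in> Cset d n \<Longrightarrow> Ginf d xs n f \<in> Clim d xs"
  unfolding Ginf_def Clim_def by (rule quotientI) auto

lemma Clim_cases: "A \<in> Clim d xs \<Longrightarrow> (\<And>n f. f \<in> Cset d n \<Longrightarrow> A = Ginf d xs n f \<Longrightarrow> P) \<Longrightarrow> P"
  unfolding Clim_def Ginf_def by (erule quotientE) auto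

lemma R_sym: "\<forall>m. xs m \<in> Xsp d m \<Longrightarrow> (x, y) \<in> limrel d xs \<Longrightarrow> (y, x) \<in> limrel d xs"
  using R_equiv[of xs d] unfolding equiv_def sym_def by blast

lemma partGam': "\<forall>m. xs m \<in> Xsp d m \<Longrightarrow> n \<le> P \<Longrightarrow> eqC d P (alph d P (Gam d xs n (P - n) f)) (Gam d xs n (P - n) (alph d n f))"
  using partGam[of xs d n "P - n" f] by simp

lemma R_alph:
  assumes xsX: "\<forall>m. xs m \<in> Xsp d m" and r: "((n, f), (m, g)) \<in> limrel d xs"
  shows "((n, alph d n f), (m, alph d m g)) \<in> limrel d xs"
proof -
  obtain P where P: "n \<le> P" "m \<le> P" "eqC d P (Gam d xs n (P - n) f) (Gam d xs m (P - m) g)"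
    using R_lift[OF xsX r] by blast
  have 1: "eqC d P (Gam d xs n (P - n) (alph d n f)) (alph d P (Gam d xs n (P - n) f))"
    using partGam'[OF xsX P(1)] by (rule eqC_sym)
  have 2: "eqC d P (alph d P (Gam d xs n (P - n) f)) (alph d P (Gam d xs m (P - m) g))"
    using P(3) by (rule alph_eqC)
  have 3: "eqC d P (alph d P (Gam d xs m (P - m) g)) (Gam d xs m (P - m) (alph d m g))"
    using partGam'[OF xsX P(2)] .
  have "f \<in> Cset d n" "g \<in> Cset d m" using r by (auto simp: R_iff)
  then show ?thesis using P 1 2 3 by (intro R_intro) (auto intro: alph_Cset eqC_trans)
qed

lemma R_alph_rev:
  assumes xsX: "\<forall>m. xs m \<in> Xsp d m" and r: "((n, alph d n f), (m, alph d m g)) \<in> limrel d xs"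
  shows "((n, f), (m, g)) \<in> limrel d xs"
proof -
  obtain P where P: "n \<le> P" "m \<le> P" "eqC d P (Gam d xs n (P - n) (alph d n f)) (Gam d xs m (P - m) (alph d m g))"
    using R_lift[OF xsX r] by blast
  have 1: "eqC d P (alph d P (Gam d xs n (P - n) f)) (Gam d xs n (P - n) (alph d n f))"
    using partGam'[OF xsX P(1)] .
  have 3: "eqC d P (Gam d xs m (P - m) (alph d m g)) (alph d P (Gam d xs m (P - m) g))"
    using partGam'[OF xsX P(2)] by (rule eqC_sym)
  have "eqC d P (alph d P (Gam d xs n (P - n) f)) (alph d P (Gam d xs m (P - m) g))"
    using 1 P(3) 3 by (blast intro: eqC_trans)
  then have "eqC d P (Gam d xs n (P - n) f) (Gam d xs m (P - m) g)" by (rule alph_eqC_rev)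
  moreover have "f \<in> Cset d n" "g \<in> Cset d m" using r by (auto simp: R_iff intro: alph_Cset_rev)
  ultimately show ?thesis using P by (intro R_intro) auto
qed

definition alC :: "(nat \<Rightarrow> nat) \<Rightarrow> (nat \<Rightarrow> pt) \<Rightarrow> (nat \<times> elt) set \<Rightarrow> (nat \<times> elt) set" where
  "alC d xs A = (\<Union>x\<in>A. Ginf d xs (fst x) (alph d (fst x) (snd x)))"

lemma alC_Ginf:
  assumes xsX: "\<forall>m. xs m \<in> Xsp d m"
  shows "alC d xs (Ginf d xs n f) = Ginf d xs n (alph d n f)"
proof (cases "f \<in> Cset d n")
  case False
  then have "alph d n f \<notin> Cset d n" using alph_Cset_rev by blast
  then show ?thesis using False by (simp add: Ginf_empty alC_def)
next
  case True
  have "Ginf d xs (fst x) (alph d (fst x) (snd x)) = Ginf d xs n (alph d n f)" if x: "x \<in> Ginf d xs n f" for x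
  proof -
    obtain m g where xe: "x = (m, g)" by (cases x)
    have r: "((n, f), (m, g)) \<in> limrel d xs" using x xe by (simp add: Ginf_mem)
    then have g: "g \<in> Cset d m" by (simp add: R_iff)
    have "((m, alph d m g), (n, alph d n f)) \<in> limrel d xs"
      using R_alph[OF xsX R_sym[OF xsX r]] .
    then show ?thesis unfolding xe using Ginf_eq_iff[OF xsX alph_Cset[OF g] alph_Cset[OF True]] by simp
  qed
  moreover have "(n, f) \<in> Ginf d xs n f" using True by (rule Ginf_self)
  ultimately show ?thesis unfolding alC_def by auto
qed

lemma alC_bij:
  assumes xsX: "\<forall>m. xs m \<in> Xsp d m"
  shows "bij_betw (alC d xs) (Clim d xs) (Clim d xs)"
  unfolding bij_betw_def
proof (intro conjI)
  show "inj_on (alC d xs) (Clim d xs)"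
  proof (rule inj_onI)
    fix A B assume A: "A \<in> Clim d xs" and B: "B \<in> Clim d xs" and e: "alC d xs A = alC d xs B"
    obtain n f where f: "f \<in> Cset d n" "A = Ginf d xs n f" using A by (rule Clim_cases)
    obtain m g where g: "g \<in> Cset d m" "B = Ginf d xs m g" using B by (rule Clim_cases)
    have "Ginf d xs n (alph d n f) = Ginf d xs m (alph d m g)" using e f g by (simp add: alC_Ginf[OF xsX])
    then have "((n, alph d n f), (m, alph d m g)) \<in> limrel d xs"
      using Ginf_eq_iff[OF xsX alph_Cset[OF f(1)] alph_Cset[OF g(1)]] by simp
    then have "((n, f), (m, g)) \<in> limrel d xs" by (rule R_alph_rev[OF xsX])
    then show "A = B" using f g Ginf_eq_iff[OF xsX f(1) g(1)] by simp
  qed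
  show "alC d xs ` Clim d xs = Clim d xs"
  proof
    show "alC d xs ` Clim d xs \<subseteq> Clim d xs"
    proof
      fix B assume "B \<in> alC d xs ` Clim d xs"
      then obtain A where A: "A \<in> Clim d xs" "B = alC d xs A" by blast
      obtain n f where f: "f \<in> Cset d n" "A = Ginf d xs n f" using A(1) by (rule Clim_cases)
      show "B \<in> Clim d xs" using A f by (simp add: alC_Ginf[OF xsX] Ginf_Clim alph_Cset)
    qed
    show "Clim d xs \<subseteq> alC d xs ` Clim d xs"
    proof
      fix B assume B: "B \<in> Clim d xs"
      obtain n g where g: "g \<in> Cset d n" "B = Ginf d xs n g" using B by (rule Clim_cases)
      have bc: "bet d n g \<in> Cset d n" using g(1) by (rule bet_Cset)
      have "((n, alph d n (bet d n g)), (n, g)) \<in> limrel d xs"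
        using alph_Cset[OF bc] g(1) alph_bet[of d n g] by (intro R_intro[where P = n]) auto
      then have "alC d xs (Ginf d xs n (bet d n g)) = B"
        using g Ginf_eq_iff[OF xsX alph_Cset[OF bc] g(1)] by (simp add: alC_Ginf[OF xsX])
      then show "B \<in> alC d xs ` Clim d xs" using Ginf_Clim[OF bc] by force
    qed
  qed
qed



definition cop :: "(nat \<Rightarrow> nat) \<Rightarrow> (nat \<Rightarrow> pt) \<Rightarrow> (nat \<Rightarrow> elt \<Rightarrow> elt \<Rightarrow> elt) \<Rightarrow> (nat \<times> elt) set \<Rightarrow> (nat \<times> elt) set \<Rightarrow> (nat \<times> elt) set" where
  "cop d xs op A B = (\<Union>x\<in>A. \<Union>z\<in>B. Ginf d xs (max (fst x) (fst z))
      (op (max (fst x) (fst z)) (Gam d xs (fst x) (max (fst x) (fst z) - fst x) (snd x))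
                                 (Gam d xs (fst z) (max (fst x) (fst z) - fst z) (snd z))))"

definition uop :: "(nat \<Rightarrow> nat) \<Rightarrow> (nat \<Rightarrow> pt) \<Rightarrow> (nat \<Rightarrow> elt \<Rightarrow> elt) \<Rightarrow> (nat \<times> elt) set \<Rightarrow> (nat \<times> elt) set" where
  "uop d xs op A = (\<Union>x\<in>A. Ginf d xs (fst x) (op (fst x) (snd x)))"

lemma cadd_cop: "cadd d xs A B = cop d xs (\<lambda>_. eadd) A B"
  by (simp add: cadd_def cop_def case_prod_beta)
lemma cmul_cop: "cmul d xs A B = cop d xs (emul d) A B"
  by (simp add: cmul_def cop_def case_prod_beta)
lemma csmul_uop: "csmul d xs c A = uop d xs (\<lambda>_. esmul c) A"
  by (simp add: csmul_def uop_def case_prod_beta)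
lemma cstar_uop: "cstar d xs A = uop d xs (\<lambda>_. estar) A"
  by (simp add: cstar_def uop_def case_prod_beta)

lemma UN_const2: "(\<And>x z. x \<in> A \<Longrightarrow> z \<in> B \<Longrightarrow> T x z = K) \<Longrightarrow> a \<in> A \<Longrightarrow> b \<in> B \<Longrightarrow> (\<Union>x\<in>A. \<Union>z\<in>B. T x z) = K"
  by blast
lemma UN_const1: "(\<And>x. x \<in> A \<Longrightarrow> T x = K) \<Longrightarrow> a \<in> A \<Longrightarrow> (\<Union>x\<in>A. T x) = K"
  by blast

locale binop =
  fixes d :: "nat \<Rightarrow> nat" and xs :: "nat \<Rightarrow> pt" and op :: "nat \<Rightarrow> elt \<Rightarrow> elt \<Rightarrow> elt"
  assumes xsX: "\<forall>m. xs m \<in> Xsp d m"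
    and opC: "\<And>p f g. f \<in> Cset d p \<Longrightarrow> g \<in> Cset d p \<Longrightarrow> op p f g \<in> Cset d p"
    and opE: "\<And>p f f' g g'. eqC d p f f' \<Longrightarrow> eqC d p g g' \<Longrightarrow> eqC d p (op p f g) (op p f' g')"
    and opG: "\<And>p f g. eqC d (Suc p) (Gam1 d xs p (op p f g)) (op (Suc p) (Gam1 d xs p f) (Gam1 d xs p g))"
    and opA: "\<And>p f g. f \<in> Cset d p \<Longrightarrow> g \<in> Cset d p \<Longrightarrow> eqC d p (alph d p (op p f g)) (op p (alph d p f) (alph d p g))"
begin

lemma opGam: "eqC d (q + p) (Gam d xs q p (op q f g)) (op (q + p) (Gam d xs q p f) (Gam d xs q p g))"
proof (induction p)
  case 0 then show ?case by (simp add: eqC_refl)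
next
  case (Suc p)
  have "eqC d (Suc (q + p)) (Gam1 d xs (q + p) (Gam d xs q p (op q f g)))
          (Gam1 d xs (q + p) (op (q + p) (Gam d xs q p f) (Gam d xs q p g)))"
    by (rule Gam1_eqC[OF xsX Suc.IH])
  then show ?case using eqC_trans opG by (simp only: add_Suc_right Gam.simps)
qed

lemma opGam': "M \<le> P \<Longrightarrow> eqC d P (Gam d xs M (P - M) (op M f g)) (op P (Gam d xs M (P - M) f) (Gam d xs M (P - M) g))"
  using opGam[of M "P - M" f g] by simp

lemma lift2:
  assumes "n \<le> M" "m \<le> M" "M \<le> P"
  shows "eqC d P (Gam d xs M (P - M) (op M (Gam d xs n (M - n) f) (Gam d xs m (M - m) g)))
                 (op P (Gam d xs n (P - n) f) (Gam d xs m (P - m) g))"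
  using opGam'[OF assms(3), of "Gam d xs n (M - n) f" "Gam d xs m (M - m) g"]
    Gam_le[OF assms(1) assms(3), of d xs f] Gam_le[OF assms(2) assms(3), of d xs g] by simp

lemma cop_rel:
  assumes r1: "((n2, f2), (n, f)) \<in> limrel d xs" and r2: "((m2, g2), (m, g)) \<in> limrel d xs"
  shows "((max n2 m2, op (max n2 m2) (Gam d xs n2 (max n2 m2 - n2) f2) (Gam d xs m2 (max n2 m2 - m2) g2)),
          (max n m, op (max n m) (Gam d xs n (max n m - n) f) (Gam d xs m (max n m - m) g))) \<in> limrel d xs"
proof -
  obtain p1 where p1: "n2 \<le> p1" "n \<le> p1" "\<And>P. p1 \<le> P \<Longrightarrow> eqC d P (Gam d xs n2 (P - n2) f2) (Gam d xs n (P - n) f)"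
    using R_lift[OF xsX r1] by blast
  obtain p2 where p2: "m2 \<le> p2" "m \<le> p2" "\<And>P. p2 \<le> P \<Longrightarrow> eqC d P (Gam d xs m2 (P - m2) g2) (Gam d xs m (P - m) g)"
    using R_lift[OF xsX r2] by blast
  let ?M = "max n m" and ?M2 = "max n2 m2"
  let ?P = "max (max p1 p2) (max ?M ?M2)"
  have c: "f2 \<in> Cset d n2" "f \<in> Cset d n" "g2 \<in> Cset d m2" "g \<in> Cset d m" using r1 r2 by (auto simp: R_iff)
  have a: "eqC d ?P (Gam d xs ?M2 (?P - ?M2) (op ?M2 (Gam d xs n2 (?M2 - n2) f2) (Gam d xs m2 (?M2 - m2) g2)))
                 (op ?P (Gam d xs n2 (?P - n2) f2) (Gam d xs m2 (?P - m2) g2))"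
    by (rule lift2) auto
  have b: "eqC d ?P (Gam d xs ?M (?P - ?M) (op ?M (Gam d xs n (?M - n) f) (Gam d xs m (?M - m) g)))
                 (op ?P (Gam d xs n (?P - n) f) (Gam d xs m (?P - m) g))"
    by (rule lift2) auto
  have e: "eqC d ?P (op ?P (Gam d xs n2 (?P - n2) f2) (Gam d xs m2 (?P - m2) g2)) (op ?P (Gam d xs n (?P - n) f) (Gam d xs m (?P - m) g))"
    by (rule opE) (auto intro: p1(3) p2(3))
  have fin: "eqC d ?P (Gam d xs ?M2 (?P - ?M2) (op ?M2 (Gam d xs n2 (?M2 - n2) f2) (Gam d xs m2 (?M2 - m2) g2)))
     (Gam d xs ?M (?P - ?M) (op ?M (Gam d xs n (?M - n) f) (Gam d xs m (?M - m) g)))"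
    using eqC_trans[OF eqC_trans[OF a e] eqC_sym[OF b]] .
  have C1: "op ?M2 (Gam d xs n2 (?M2 - n2) f2) (Gam d xs m2 (?M2 - m2) g2) \<in> Cset d ?M2"
    using c by (auto intro!: opC Gam_Cset'[OF xsX])
  have C2: "op ?M (Gam d xs n (?M - n) f) (Gam d xs m (?M - m) g) \<in> Cset d ?M"
    using c by (auto intro!: opC Gam_Cset'[OF xsX])
  show ?thesis
    by (rule R_intro[OF C1 C2 _ _ fin]) auto
qed

lemma cop_Ginf:
  assumes f: "f \<in> Cset d n" and g: "g \<in> Cset d m"
  shows "cop d xs op (Ginf d xs n f) (Ginf d xs m g)
     = Ginf d xs (max n m) (op (max n m) (Gam d xs n (max n m - n) f) (Gam d xs m (max n m - m) g))"
    (is "_ = Ginf d xs ?M ?h")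
proof -
  have hC: "?h \<in> Cset d ?M" by (auto intro!: opC Gam_Cset'[OF xsX] f g)
  have T: "Ginf d xs (max (fst x) (fst z))
      (op (max (fst x) (fst z)) (Gam d xs (fst x) (max (fst x) (fst z) - fst x) (snd x))
                                 (Gam d xs (fst z) (max (fst x) (fst z) - fst z) (snd z))) = Ginf d xs ?M ?h"
    if x: "x \<in> Ginf d xs n f" and z: "z \<in> Ginf d xs m g" for x z
  proof -
    obtain n2 f2 where xe: "x = (n2, f2)" by (cases x)
    obtain m2 g2 where ze: "z = (m2, g2)" by (cases z)
    have r1: "((n2, f2), (n, f)) \<in> limrel d xs" using x xe R_sym[OF xsX] by (auto simp: Ginf_mem)
    have r2: "((m2, g2), (m, g)) \<in> limrel d xs" using z ze R_sym[OF xsX] by (auto simp: Ginf_mem)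
    have c: "f2 \<in> Cset d n2" "g2 \<in> Cset d m2" using r1 r2 by (auto simp: R_iff)
    have h2C: "op (max n2 m2) (Gam d xs n2 (max n2 m2 - n2) f2) (Gam d xs m2 (max n2 m2 - m2) g2) \<in> Cset d (max n2 m2)"
      using c by (auto intro!: opC Gam_Cset'[OF xsX])
    show ?thesis unfolding xe ze fst_conv snd_conv
      using cop_rel[OF r1 r2] Ginf_eq_iff[OF xsX h2C hC] by simp
  qed
  show ?thesis unfolding cop_def by (rule UN_const2[OF T Ginf_self[OF f] Ginf_self[OF g]])
qed

lemma alC_cop:
  assumes A: "A \<in> Clim d xs" and B: "B \<in> Clim d xs"
  shows "alC d xs (cop d xs op A B) = cop d xs op (alC d xs A) (alC d xs B)"
proof -
  obtain n f where f: "f \<in> Cset d n" "A = Ginf d xs n f" using A by (rule Clim_cases)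
  obtain m g where g: "g \<in> Cset d m" "B = Ginf d xs m g" using B by (rule Clim_cases)
  let ?M = "max n m"
  have fa: "alph d n f \<in> Cset d n" and ga: "alph d m g \<in> Cset d m" using f g by (auto intro: alph_Cset)
  have Gf: "Gam d xs n (?M - n) f \<in> Cset d ?M" and Gg: "Gam d xs m (?M - m) g \<in> Cset d ?M"
    using f g by (auto intro: Gam_Cset'[OF xsX])
  have 1: "eqC d ?M (alph d ?M (op ?M (Gam d xs n (?M - n) f) (Gam d xs m (?M - m) g)))
       (op ?M (alph d ?M (Gam d xs n (?M - n) f)) (alph d ?M (Gam d xs m (?M - m) g)))"
    using Gf Gg by (rule opA)
  have 2: "eqC d ?M (op ?M (alph d ?M (Gam d xs n (?M - n) f)) (alph d ?M (Gam d xs m (?M - m) g)))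
       (op ?M (Gam d xs n (?M - n) (alph d n f)) (Gam d xs m (?M - m) (alph d m g)))"
    by (rule opE) (auto intro: partGam'[OF xsX])
  have C1: "alph d ?M (op ?M (Gam d xs n (?M - n) f) (Gam d xs m (?M - m) g)) \<in> Cset d ?M"
    using Gf Gg by (intro alph_Cset opC)
  have Gfa: "Gam d xs n (?M - n) (alph d n f) \<in> Cset d ?M" using fa by (intro Gam_Cset'[OF xsX]) auto
  have Gga: "Gam d xs m (?M - m) (alph d m g) \<in> Cset d ?M" using ga by (intro Gam_Cset'[OF xsX]) auto
  have C2: "op ?M (Gam d xs n (?M - n) (alph d n f)) (Gam d xs m (?M - m) (alph d m g)) \<in> Cset d ?M"
    using Gfa Gga by (rule opC)
  have 3: "eqC d ?M (Gam d xs ?M (?M - ?M) (alph d ?M (op ?M (Gam d xs n (?M - n) f) (Gam d xs m (?M - m) g))))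
     (Gam d xs ?M (?M - ?M) (op ?M (Gam d xs n (?M - n) (alph d n f)) (Gam d xs m (?M - m) (alph d m g))))"
    using eqC_trans[OF 1 2] by simp
  have R: "((?M, alph d ?M (op ?M (Gam d xs n (?M - n) f) (Gam d xs m (?M - m) g))),
         (?M, op ?M (Gam d xs n (?M - n) (alph d n f)) (Gam d xs m (?M - m) (alph d m g)))) \<in> limrel d xs"
    by (rule R_intro[OF C1 C2 order_refl order_refl 3])
  have E: "Ginf d xs ?M (alph d ?M (op ?M (Gam d xs n (?M - n) f) (Gam d xs m (?M - m) g)))
     = Ginf d xs ?M (op ?M (Gam d xs n (?M - n) (alph d n f)) (Gam d xs m (?M - m) (alph d m g)))"
    using Ginf_eq_iff[OF xsX C1 C2] R by blast
  show ?thesis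
    unfolding f(2) g(2) cop_Ginf[OF f(1) g(1)] cop_Ginf[OF fa ga] alC_Ginf[OF xsX] E ..
qed

end

locale unop =
  fixes d :: "nat \<Rightarrow> nat" and xs :: "nat \<Rightarrow> pt" and op :: "nat \<Rightarrow> elt \<Rightarrow> elt"
  assumes xsX: "\<forall>m. xs m \<in> Xsp d m"
    and opC: "\<And>p f. f \<in> Cset d p \<Longrightarrow> op p f \<in> Cset d p"
    and opE: "\<And>p f f'. eqC d p f f' \<Longrightarrow> eqC d p (op p f) (op p f')"
    and opG: "\<And>p f. eqC d (Suc p) (Gam1 d xs p (op p f)) (op (Suc p) (Gam1 d xs p f))"
    and opA: "\<And>p f. f \<in> Cset d p \<Longrightarrow> eqC d p (alph d p (op p f)) (op p (alph d p f))"
begin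

lemma opGam: "eqC d (q + p) (Gam d xs q p (op q f)) (op (q + p) (Gam d xs q p f))"
proof (induction p)
  case 0 then show ?case by (simp add: eqC_refl)
next
  case (Suc p)
  have "eqC d (Suc (q + p)) (Gam1 d xs (q + p) (Gam d xs q p (op q f)))
          (Gam1 d xs (q + p) (op (q + p) (Gam d xs q p f)))"
    by (rule Gam1_eqC[OF xsX Suc.IH])
  then show ?case using eqC_trans opG by (simp only: add_Suc_right Gam.simps)
qed

lemma opGam': "M \<le> P \<Longrightarrow> eqC d P (Gam d xs M (P - M) (op M f)) (op P (Gam d xs M (P - M) f))"
  using opGam[of M "P - M" f] by simp

lemma uop_rel:
  assumes r1: "((n2, f2), (n, f)) \<in> limrel d xs"
  shows "((n2, op n2 f2), (n, op n f)) \<in> limrel d xs"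
proof -
  obtain P where p1: "n2 \<le> P" "n \<le> P" "eqC d P (Gam d xs n2 (P - n2) f2) (Gam d xs n (P - n) f)"
    using R_lift[OF xsX r1] by blast
  have c: "f2 \<in> Cset d n2" "f \<in> Cset d n" using r1 by (auto simp: R_iff)
  have "eqC d P (op P (Gam d xs n2 (P - n2) f2)) (op P (Gam d xs n (P - n) f))"
    using p1(3) by (rule opE)
  then have fin: "eqC d P (Gam d xs n2 (P - n2) (op n2 f2)) (Gam d xs n (P - n) (op n f))"
    using eqC_trans[OF eqC_trans[OF opGam'[OF p1(1), of f2]] eqC_sym[OF opGam'[OF p1(2), of f]]] by blast
  show ?thesis
    by (rule R_intro[OF opC[OF c(1)] opC[OF c(2)] p1(1) p1(2) fin])
qed

lemma uop_Ginf:
  assumes f: "f \<in> Cset d n"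
  shows "uop d xs op (Ginf d xs n f) = Ginf d xs n (op n f)"
proof -
  have hC: "op n f \<in> Cset d n" using f by (rule opC)
  have T: "Ginf d xs (fst x) (op (fst x) (snd x)) = Ginf d xs n (op n f)"
    if x: "x \<in> Ginf d xs n f" for x
  proof -
    obtain n2 f2 where xe: "x = (n2, f2)" by (cases x)
    have r1: "((n2, f2), (n, f)) \<in> limrel d xs" using x xe R_sym[OF xsX] by (auto simp: Ginf_mem)
    have c: "f2 \<in> Cset d n2" using r1 by (auto simp: R_iff)
    show ?thesis unfolding xe fst_conv snd_conv
      using uop_rel[OF r1] Ginf_eq_iff[OF xsX _ hC] c by (auto intro!: opC)
  qed
  show ?thesis unfolding uop_def by (rule UN_const1[OF T Ginf_self[OF f]])
qed

lemma alC_uop: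
  assumes A: "A \<in> Clim d xs"
  shows "alC d xs (uop d xs op A) = uop d xs op (alC d xs A)"
proof -
  obtain n f where f: "f \<in> Cset d n" "A = Ginf d xs n f" using A by (rule Clim_cases)
  have fa: "alph d n f \<in> Cset d n" using f by (auto intro: alph_Cset)
  have C1: "alph d n (op n f) \<in> Cset d n" using f by (intro alph_Cset opC) auto
  have C2: "op n (alph d n f) \<in> Cset d n" using fa by (rule opC)
  have 3: "eqC d n (Gam d xs n (n - n) (alph d n (op n f))) (Gam d xs n (n - n) (op n (alph d n f)))"
    using opA[OF f(1)] by simp
  have R: "((n, alph d n (op n f)), (n, op n (alph d n f))) \<in> limrel d xs"
    by (rule R_intro[OF C1 C2 order_refl order_refl 3])
  have E: "Ginf d xs n (alph d n (op n f)) = Ginf d xs n (op n (alph d n f))"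
    using Ginf_eq_iff[OF xsX C1 C2] R by blast
  show ?thesis
    unfolding f(2) uop_Ginf[OF f(1)] uop_Ginf[OF fa] alC_Ginf[OF xsX] E ..
qed

end



lemma binop_eadd: assumes xsX: "\<forall>m. xs m \<in> Xsp d m" shows "binop d xs (\<lambda>_. eadd)"
proof
  show "\<forall>m. xs m \<in> Xsp d m" by (rule xsX)
  fix p f g assume "f \<in> Cset d p" "g \<in> Cset d p"
  then show "eadd f g \<in> Cset d p" by (auto simp: Cset_def eadd_def intro: continuous_on_add)
next
  fix p f f' g g' assume "eqC d p f f'" "eqC d p g g'"
  then show "eqC d p (eadd f g) (eadd f' g')" by (simp add: eqC_def eadd_def)
next
  fix p f g show "eqC d (Suc p) (Gam1 d xs p (eadd f g)) (eadd (Gam1 d xs p f) (Gam1 d xs p g))"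
    by (simp add: eqC_def Gam1_eq eadd_def)
next
  fix p f g show "eqC d p (alph d p (eadd f g)) (eadd (alph d p f) (alph d p g))"
    by (simp add: eqC_def alph_eq eadd_def sig_idx)
qed

lemma unop_esmul: assumes xsX: "\<forall>m. xs m \<in> Xsp d m" shows "unop d xs (\<lambda>_. esmul c)"
proof
  show "\<forall>m. xs m \<in> Xsp d m" by (rule xsX)
  fix p f assume "f \<in> Cset d p"
  then show "esmul c f \<in> Cset d p" by (auto simp: Cset_def esmul_def intro: continuous_on_mult continuous_on_const)
next
  fix p f f' assume "eqC d p f f'"
  then show "eqC d p (esmul c f) (esmul c f')" by (simp add: eqC_def esmul_def)
next
  fix p f show "eqC d (Suc p) (Gam1 d xs p (esmul c f)) (esmul c (Gam1 d xs p f))"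
    by (simp add: eqC_def Gam1_eq esmul_def)
next
  fix p f show "eqC d p (alph d p (esmul c f)) (esmul c (alph d p f))"
    by (simp add: eqC_def alph_eq esmul_def sig_idx)
qed

lemma unop_estar: assumes xsX: "\<forall>m. xs m \<in> Xsp d m" shows "unop d xs (\<lambda>_. estar)"
proof
  show "\<forall>m. xs m \<in> Xsp d m" by (rule xsX)
  fix p f assume "f \<in> Cset d p"
  then show "estar f \<in> Cset d p" by (auto simp: Cset_def estar_def madj_def intro: continuous_on_cnj)
next
  fix p f f' assume "eqC d p f f'"
  then show "eqC d p (estar f) (estar f')" by (simp add: eqC_def estar_def madj_def)
next
  fix p f show "eqC d (Suc p) (Gam1 d xs p (estar f)) (estar (Gam1 d xs p f))"
    by (auto simp: eqC_def Gam1_eq estar_def madj_def)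
next
  fix p f show "eqC d p (alph d p (estar f)) (estar (alph d p f))"
    by (simp add: eqC_def alph_eq estar_def madj_def sig_idx)
qed

lemma emul_C: "f \<in> Cset d p \<Longrightarrow> g \<in> Cset d p \<Longrightarrow> emul d p f g \<in> Cset d p"
  unfolding Cset_def emul_def mmul_def
  by (auto intro!: continuous_on_sum continuous_on_mult)

lemma emul_E: "eqC d p f f' \<Longrightarrow> eqC d p g g' \<Longrightarrow> eqC d p (emul d p f g) (emul d p f' g')"
  unfolding eqC_def emul_def mmul_def by (auto intro!: sum.cong)

lemma emul_A:
  assumes "f \<in> Cset d p" "g \<in> Cset d p"
  shows "eqC d p (alph d p (emul d p f g)) (emul d p (alph d p f) (alph d p g))"
  unfolding eqC_def
proof (intro ballI allI impI)
  fix y and k :: nat and a b assume a: "a \<in> idx d p" and b: "b \<in> idx d p"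
  let ?k = "(k + 1) mod 2 ^ p"
  have "emul d p (alph d p f) (alph d p g) y k a b
     = (\<Sum>c\<in>idx d p. f y ?k (sig d a) (sig d c) * g y ?k (sig d c) (sig d b))"
    unfolding emul_def mmul_def by (rule sum.cong) (auto simp: alph_eq a b)
  also have "\<dots> = (\<Sum>c\<in>idx d p. f y ?k (sig d a) c * g y ?k c (sig d b))"
    by (rule sum.reindex_bij_betw[OF sig_bij])
  also have "\<dots> = alph d p (emul d p f g) y k a b"
    by (simp add: alph_eq a b emul_def mmul_def)
  finally show "alph d p (emul d p f g) y k a b = emul d p (alph d p f) (alph d p g) y k a b" by simp
qed

lemma idx_last_image:
  assumes j: "1 \<le> j" "j \<le> lsz d (Suc p)"
  shows "{c \<in> idx d (Suc p). last c = j} = (\<lambda>c'. c' @ [j]) ` idx d p"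
proof
  show "{c \<in> idx d (Suc p). last c = j} \<subseteq> (\<lambda>c'. c' @ [j]) ` idx d p"
  proof
    fix c assume c: "c \<in> {c \<in> idx d (Suc p). last c = j}"
    then have "length c = Suc p" "butlast c \<in> idx d p" "last c = j" by (auto simp: idx_Suc)
    moreover then have "c = butlast c @ [last c]" by (metis append_butlast_last_id list.size(3) nat.distinct(1))
    ultimately show "c \<in> (\<lambda>c'. c' @ [j]) ` idx d p" by (metis image_eqI)
  qed
  show "(\<lambda>c'. c' @ [j]) ` idx d p \<subseteq> {c \<in> idx d (Suc p). last c = j}"
    using idx_snoc[OF _ j] by auto
qed

lemma emul_G:
  assumes xsX: "\<forall>m. xs m \<in> Xsp d m"
  shows "eqC d (Suc p) (Gam1 d xs p (emul d p f g)) (emul d (Suc p) (Gam1 d xs p f) (Gam1 d xs p g))"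
  unfolding eqC_def
proof (intro ballI allI impI)
  fix y and k :: nat and a b assume a: "a \<in> idx d (Suc p)" and b: "b \<in> idx d (Suc p)"
  show "Gam1 d xs p (emul d p f g) y k a b = emul d (Suc p) (Gam1 d xs p f) (Gam1 d xs p g) y k a b"
  proof (cases "last a = last b")
    case False
    have "emul d (Suc p) (Gam1 d xs p f) (Gam1 d xs p g) y k a b = (\<Sum>c\<in>idx d (Suc p). 0)"
      unfolding emul_def mmul_def by (rule sum.cong) (use False in \<open>auto simp: Gam1_eq\<close>)
    then show ?thesis using False by (simp add: Gam1_eq)
  next
    case True
    define j where "j = last a"
    have j: "1 \<le> j" "j \<le> lsz d (Suc p)" using a by (auto simp: idx_Suc j_def)
    have jb: "last b = j" using True j_def by simp
    define F where "F c' = f (fst (Smap d xs p j y k)) (snd (Smap d xs p j y k)) (butlast a) c' *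
                         g (fst (Smap d xs p j y k)) (snd (Smap d xs p j y k)) c' (butlast b)" for c'
    have "emul d (Suc p) (Gam1 d xs p f) (Gam1 d xs p g) y k a b
        = (\<Sum>c\<in>idx d (Suc p). if last c = j then F (butlast c) else 0)"
      unfolding emul_def mmul_def by (rule sum.cong) (auto simp: Gam1_eq F_def j_def jb[unfolded j_def])
    also have "\<dots> = (\<Sum>c\<in>{c \<in> idx d (Suc p). last c = j}. F (butlast c))"
      by (rule sum.inter_filter[symmetric]) (rule finite_idx)
    also have "\<dots> = (\<Sum>c\<in>(\<lambda>c'. c' @ [j]) ` idx d p. F (butlast c))"
      by (simp only: idx_last_image[OF j])
    also have "\<dots> = (\<Sum>c'\<in>idx d p. F c')"
      by (subst sum.reindex) (auto simp: inj_on_def)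
    also have "\<dots> = Gam1 d xs p (emul d p f g) y k a b"
      by (simp add: Gam1_eq True emul_def mmul_def F_def j_def)
    finally show ?thesis by simp
  qed
qed

lemma binop_emul: assumes xsX: "\<forall>m. xs m \<in> Xsp d m" shows "binop d xs (emul d)"
  by unfold_locales (use xsX in \<open>auto intro: emul_C emul_E emul_G[OF xsX] emul_A\<close>)

theorem mainTheorem3:
  fixes d :: "nat \<Rightarrow> nat" and xs :: "nat \<Rightarrow> pt"
  assumes d0: "d 0 = 1"
    and dgt: "\<forall>n\<ge>1. d n > 2 ^ (n - 1)"
    and kap: "kappa d > 1 / 2"
    and xsX: "\<forall>m. xs m \<in> Xsp d m"
    and dens: "\<forall>n. Xsp d n \<subseteq> closure (dense_pts d xs n)"
  shows "(\<forall>n. \<forall>f\<in>Cset d n.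
            eqC d (Suc n) (alph d (Suc n) (Gam1 d xs n f)) (Gam1 d xs n (alph d n f)))
       \<and> (\<exists>\<alpha>. bij_betw \<alpha> (Clim d xs) (Clim d xs)
            \<and> (\<forall>n. \<forall>f\<in>Cset d n. \<alpha> (Ginf d xs n f) = Ginf d xs n (alph d n f))
            \<and> (\<forall>A\<in>Clim d xs. \<forall>B\<in>Clim d xs.
                 \<alpha> (cadd d xs A B) = cadd d xs (\<alpha> A) (\<alpha> B)
               \<and> \<alpha> (cmul d xs A B) = cmul d xs (\<alpha> A) (\<alpha> B))
            \<and> (\<forall>c. \<forall>A\<in>Clim d xs. \<alpha> (csmul d xs c A) = csmul d xs c (\<alpha> A))
            \<and> (\<forall>A\<in>Clim d xs. \<alpha> (cstar d xs A) = cstar d xs (\<alpha> A)))"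
proof (intro conjI exI[of _ "alC d xs"] allI ballI)
  fix n f show "eqC d (Suc n) (alph d (Suc n) (Gam1 d xs n f)) (Gam1 d xs n (alph d n f))"
    by (rule part1[OF xsX])
next
  show "bij_betw (alC d xs) (Clim d xs) (Clim d xs)" by (rule alC_bij[OF xsX])
next
  fix n f show "alC d xs (Ginf d xs n f) = Ginf d xs n (alph d n f)" by (rule alC_Ginf[OF xsX])
next
  fix A B assume "A \<in> Clim d xs" "B \<in> Clim d xs"
  then show "alC d xs (cadd d xs A B) = cadd d xs (alC d xs A) (alC d xs B)"
    unfolding cadd_cop by (rule binop.alC_cop[OF binop_eadd[OF xsX]])
next
  fix A B assume "A \<in> Clim d xs" "B \<in> Clim d xs"
  then show "alC d xs (cmul d xs A B) = cmul d xs (alC d xs A) (alC d xs B)"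
    unfolding cmul_cop by (rule binop.alC_cop[OF binop_emul[OF xsX]])
next
  fix c A assume "A \<in> Clim d xs"
  then show "alC d xs (csmul d xs c A) = csmul d xs c (alC d xs A)"
    unfolding csmul_uop by (rule unop.alC_uop[OF unop_esmul[OF xsX]])
next
  fix A assume "A \<in> Clim d xs"
  then show "alC d xs (cstar d xs A) = cstar d xs (alC d xs A)"
    unfolding cstar_uop by (rule unop.alC_uop[OF unop_estar[OF xsX]])
qed

end
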